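(* Let $\Lambda\subseteq\mathbb{R}^d$ be a $d$-dimensional lattice, $F\colon K\to\mathbb{R}$ a $\Lambda$-periodic filter on a $\Lambda$-periodic cell complex $K$, and $\mathcal{M}=\mathcal{M}(F,\Lambda)$ its periodic merge tree with frequency function $\Phi$. If a point $B\in\mathcal{M}$ covers another point $A\in\mathcal{M}$, then $\Phi(B)\le\Phi(A)$.
   Context: A cell complex $K$ in $\mathbb{R}^d$ is a locally finite collection of cells (each homeomorphic to a closed ball, boundaries unions of lower-dimensional cells, intersections unions of shared faces). A lattice spanned by linearly independent vectors is the set of their integer combinations; $\mathrm{vol}_p$ is the $p$-volume of its unit cell $\{\sum c_iu_i: c_i\in[0,1)\}$ ($\mathrm{vol}_0(\{0\})=1$). $K$ is $\Lambda$-periodic if $\sigma+u\in K$ for $u\in\Lambda$; a filter $F$ satisfies $F(\sigma)\le F(\tau)$ for faces $\sigma$ of $\tau$ and is $\Lambda$-periodic if $F(\sigma+u)=F(\sigma)$; $K/\Lambda$ is the finite quotient complex on the torus $\mathbb{R}^d/\Lambda$, $F/\Lambda$ the quotient filter. The periodic merge tree $\mathcal{M}(F,\Lambda)$ is the merge tree of $F/\Lambda$: the quotient of $\{(x,s): x\in(K/\Lambda)_s\}$ ($(K/\Lambda)_s=(F/\Lambda)^{-1}(-\infty,s]$) by $(x,s)\sim(y,t)$ iff $s=t$ and $x,y$ are in the same connected component of $(K/\Lambda)_s$, with quotient topology and height $h$ (the $s$-coordinate); points are identified with components of sublevel sets, and $B$ covers $A$ if $h(A)\le h(B)$ and $A\subseteq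 B$. For a component $\Gamma$, with $\phi\colon\mathbb{R}^d\to\mathbb{R}^d/\Lambda$ the projection, a shadow is a component of $\phi^{-1}(\Gamma)$, the periodicity lattice is $\Lambda_\Gamma=\{u\in\Lambda:\gamma+u=\gamma\}$ for some (equivalently every) shadow $\gamma$, $p=\dim\Lambda_\Gamma$, and the frequency function is $\Phi(\Gamma)=\frac{\mathrm{vol}_p(\Lambda_\Gamma)}{\mathrm{vol}_d(\Lambda)}\nu_{d-p}R^{d-p}$ ($\nu_q$ the volume of the unit $q$-ball). Monomials are ordered by $tR^a<sR^b$ iff $a<b$, or $a=b$ and $t<s$; $\le$ allows equality. *)

theory Defs
  imports "HOL-Analysis.Analysis"
begin

definition int_span :: "'a::euclidean_space set \<Rightarrow> 'a set" where
  "int_span B = {(\<Sum>b\<in>B. of_int (c b) *\<^sub>R b) | c. True}"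

definition lattice_basis :: "'a::euclidean_space set \<Rightarrow> 'a set \<Rightarrow> bool" where
  "lattice_basis L B \<longleftrightarrow> finite B \<and> independent B \<and> L = int_span B"

definition full_lattice :: "'a::euclidean_space set \<Rightarrow> bool" where
  "full_lattice L \<longleftrightarrow> (\<exists>B. lattice_basis L B \<and> card B = DIM('a))"

definition gram_det :: "'a::euclidean_space set \<Rightarrow> real" where
  "gram_det B = (\<Sum>\<pi> | \<pi> permutes B. of_int (sign \<pi>) * (\<Prod>b\<in>B. b \<bullet> \<pi> b))"

text \<open>p-volume of the unit cell of a lattice (p = number of basis vectors),
  i.e. the p-volume of the parallelotope spanned by a basis; vol_0({0}) = 1.\<close>
definition lat_vol :: "'a::euclidean_space set \<Rightarrow> real" where
  "lat_vol L = sqrt (gram_det (SOME B. lattice_basis L B))"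

definition tproj :: "'a::euclidean_space set \<Rightarrow> 'a \<Rightarrow> 'a set" where
  "tproj L x = (\<lambda>u. x + u) ` L"

definition torus_top :: "'a::euclidean_space set \<Rightarrow> 'a set topology" where
  "torus_top L = topology (\<lambda>U. U \<subseteq> range (tproj L) \<and> open (tproj L -` U))"

lemma istopology_torus: "istopology (\<lambda>U. U \<subseteq> range (tproj L) \<and> open (tproj L -` U))"
  unfolding istopology_def by (auto simp: vimage_Union intro!: open_Union)

definition cell_bd :: "'a::euclidean_space set \<Rightarrow> nat \<Rightarrow> 'a set \<Rightarrow> bool" where
  "cell_bd s k D \<longleftrightarrow> (\<exists>(S::'a set) h g. subspace S \<and> dim S = k \<and>
      homeomorphism (cball 0 1 \<inter> S) s h g \<and> D = h ` (sphere 0 1 \<inter> S))"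

definition is_cell :: "'a::euclidean_space set \<Rightarrow> bool" where
  "is_cell s \<longleftrightarrow> (\<exists>k D. cell_bd s k D)"

definition cell_complex :: "'a::euclidean_space set set \<Rightarrow> bool" where
  "cell_complex K \<longleftrightarrow>
     (\<forall>s\<in>K. is_cell s) \<and>
     (\<forall>x. \<exists>e>0. finite {s\<in>K. s \<inter> ball x e \<noteq> {}}) \<and>
     (\<forall>s\<in>K. \<exists>k D. cell_bd s k D \<and>
         D = \<Union>{t\<in>K. t \<subseteq> D \<and> (\<exists>j D'. cell_bd t j D' \<and> j < k)}) \<and>
     (\<forall>s\<in>K. \<forall>t\<in>K. s \<inter> t = \<Union>{r\<in>K. r \<subseteq> s \<and> r \<subseteq> t})"

text \<open>Faces of a cell t of K are the cells of K contained in t.\<close>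
definition periodic_complex :: "'a::euclidean_space set set \<Rightarrow> 'a set \<Rightarrow> bool" where
  "periodic_complex K L \<longleftrightarrow> (\<forall>s\<in>K. \<forall>u\<in>L. (\<lambda>x. x + u) ` s \<in> K)"

definition monotone_filter :: "'a::euclidean_space set set \<Rightarrow> ('a set \<Rightarrow> real) \<Rightarrow> bool" where
  "monotone_filter K F \<longleftrightarrow> (\<forall>s\<in>K. \<forall>t\<in>K. s \<subseteq> t \<longrightarrow> F s \<le> F t)"

definition periodic_filter :: "'a::euclidean_space set set \<Rightarrow> ('a set \<Rightarrow> real) \<Rightarrow> 'a set \<Rightarrow> bool" where
  "periodic_filter K F L \<longleftrightarrow> (\<forall>s\<in>K. \<forall>u\<in>L. F ((\<lambda>x. x + u) ` s) = F s)"

definition quot_sublevel ::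
  "'a::euclidean_space set set \<Rightarrow> ('a set \<Rightarrow> real) \<Rightarrow> 'a set \<Rightarrow> real \<Rightarrow> 'a set set" where
  "quot_sublevel K F L r = tproj L ` \<Union>{s\<in>K. F s \<le> r}"

text \<open>Points of the merge tree: a component G of (K/L)_r together with its height r.\<close>
definition mt_point ::
  "'a::euclidean_space set set \<Rightarrow> ('a set \<Rightarrow> real) \<Rightarrow> 'a set \<Rightarrow> 'a set set \<times> real \<Rightarrow> bool" where
  "mt_point K F L P \<longleftrightarrow>
     fst P \<in> connected_components_of (subtopology (torus_top L) (quot_sublevel K F L (snd P)))"

definition covers :: "'a set set \<times> real \<Rightarrow> 'a set set \<times> real \<Rightarrow> bool" where
  "covers B A \<longleftrightarrow> snd A \<le> snd B \<and> fst A \<subseteq> fst B"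

definition shadows :: "'a::euclidean_space set \<Rightarrow> 'a set set \<Rightarrow> 'a set set" where
  "shadows L G = components (tproj L -` G)"

definition per_lattice :: "'a::euclidean_space set \<Rightarrow> 'a set set \<Rightarrow> 'a set" where
  "per_lattice L G = (let g = (SOME g. g \<in> shadows L G) in {u\<in>L. (\<lambda>x. x + u) ` g = g})"

text \<open>A monomial t R^a is represented by the pair (t, a).\<close>
definition frequency :: "'a::euclidean_space set \<Rightarrow> 'a set set \<Rightarrow> real \<times> nat" where
  "frequency L G = (let p = dim (per_lattice L G); q = DIM('a) - p in
     (lat_vol (per_lattice L G) / lat_vol L * unit_ball_vol (real q), q))"

definition mono_le :: "real \<times> nat \<Rightarrow> real \<times> nat \<Rightarrow> bool" where
  "mono_le m n \<longleftrightarrow> snd m < snd n \<or> (snd m = snd n \<and> fst m \<le> fst n)"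

end

theory Submission
  imports Defs "Jordan_Normal_Form.Determinant"
begin

definition gramM :: "(nat \<Rightarrow> 'a::euclidean_space) \<Rightarrow> nat \<Rightarrow> real mat" where
  "gramM x n = mat n n (\<lambda>(i,j). x i \<bullet> x j)"

definition conjp :: "(nat \<Rightarrow> 'a) \<Rightarrow> nat \<Rightarrow> 'a set \<Rightarrow> (nat \<Rightarrow> nat) \<Rightarrow> 'a \<Rightarrow> 'a" where
  "conjp e n B p = (\<lambda>x. if x \<in> B then e (p (inv_into {0..<n} e x)) else x)"

lemma conjp_sign:
  assumes p: "p permutes {0..<n}" and e: "bij_betw e {0..<n} B"
  shows "sign (conjp e n B p) = sign p"
  using p finite_atLeastLessThan
proof (induction rule: permutes_induct)
  case id
  have "conjp e n B id = id"
    using e by (auto simp: conjp_def fun_eq_iff bij_betw_def f_inv_into_f)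
  then show ?case by (subst \<open>conjp e n B id = id\<close>) (simp only: sign_id)
next
  case (swap a b p)
  have pp: "p permutes {0..<n}" using swap by simp
  have fB: "finite B" using e bij_betw_finite by blast
  have inj: "inj_on e {0..<n}" using e bij_betw_def by blast
  have ea: "e a \<in> B" "e b \<in> B" using swap e bij_betwE by blast+
  have ne: "e a \<noteq> e b" using swap inj by (meson inj_on_contraD)
  have eq: "conjp e n B (Transposition.transpose a b \<circ> p) = Transposition.transpose (e a) (e b) \<circ> conjp e n B p"
  proof
    fix x
    show "conjp e n B (Transposition.transpose a b \<circ> p) x = (Transposition.transpose (e a) (e b) \<circ> conjp e n B p) x"
    proof (cases "x \<in> B")
      case True
      define z where "z = p (inv_into {0..<n} e x)"
      have "inv_into {0..<n} e x \<in> {0..<n}" using True e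
        by (metis bij_betw_def inv_into_into)
      then have z: "z \<in> {0..<n}" using pp z_def by (simp add: permutes_in_image)
      have "e (Transposition.transpose a b z) = Transposition.transpose (e a) (e b) (e z)"
        using z swap(1,2) inj unfolding Transposition.transpose_def
        by (auto dest: inj_onD)
      then show ?thesis using True by (simp add: conjp_def z_def)
    next
      case False
      then show ?thesis using ea by (auto simp: conjp_def Transposition.transpose_def)
    qed
  qed
  have perm: "permutation (conjp e n B p)"
    using permutes_bij_inv_into[OF pp e] fB unfolding conjp_def permutation_permutes by blast
  have "sign (conjp e n B (Transposition.transpose a b \<circ> p)) = sign (Transposition.transpose (e a) (e b)) * sign (conjp e n B p)"
    unfolding eq by (rule sign_compose[OF permutation_swap_id perm])
  also have "\<dots> = sign (Transposition.transpose a b) * sign p"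
    using swap ne by (simp add: sign_swap_id)
  also have "\<dots> = sign (Transposition.transpose a b \<circ> p)"
    using pp by (metis finite_atLeastLessThan permutation_permutes permutation_swap_id sign_compose)
  finally show ?case .
qed

lemma gram_det_eq:
  assumes e: "bij_betw e {0..<n} B"
  shows "gram_det B = det (gramM e n)"
proof -
  have fB: "finite B" using e bij_betw_finite by blast
  have inj: "inj_on e {0..<n}" using e bij_betw_def by blast
  have bij: "bij_betw (conjp e n B) {p. p permutes {0..<n}} {\<pi>. \<pi> permutes B}"
    using bij_betw_permutations[OF e] unfolding conjp_def by simp
  have "gram_det B = (\<Sum>\<pi>\<in>{\<pi>. \<pi> permutes B}. of_int (sign \<pi>) * (\<Prod>b\<in>B. b \<bullet> \<pi> b))"
    unfolding gram_det_def by simp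
  also have "\<dots> = (\<Sum>p\<in>{p. p permutes {0..<n}}. of_int (sign (conjp e n B p)) * (\<Prod>b\<in>B. b \<bullet> conjp e n B p b))"
    by (rule sum.reindex_bij_betw[OF bij, symmetric])
  also have "\<dots> = (\<Sum>p\<in>{p. p permutes {0..<n}}. of_int (sign p) * (\<Prod>i=0..<n. e i \<bullet> e (p i)))"
  proof (rule sum.cong[OF refl])
    fix p assume p: "p \<in> {p. p permutes {0..<n}}"
    have "(\<Prod>b\<in>B. b \<bullet> conjp e n B p b) = (\<Prod>i\<in>{0..<n}. e i \<bullet> conjp e n B p (e i))"
      by (rule prod.reindex_bij_betw[OF e, symmetric])
    also have "\<dots> = (\<Prod>i=0..<n. e i \<bullet> e (p i))"
      using e inj by (intro prod.cong) (auto simp: conjp_def bij_betw_def)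
    finally show "of_int (sign (conjp e n B p)) * (\<Prod>b\<in>B. b \<bullet> conjp e n B p b) = of_int (sign p) * (\<Prod>i=0..<n. e i \<bullet> e (p i))"
      using conjp_sign[OF _ e] p by simp
  qed
  also have "\<dots> = det (gramM e n)"
    by (subst det_def'[of _ n]) (auto simp: gramM_def intro!: sum.cong prod.cong)
  finally show ?thesis .
qed

lemma gram_transform:
  fixes x y :: "nat \<Rightarrow> 'a::euclidean_space"
  assumes M: "M \<in> carrier_mat n n"
    and xy: "\<And>i. i < n \<Longrightarrow> x i = (\<Sum>k<n. M $$ (i,k) *\<^sub>R y k)"
  shows "gramM x n = M * gramM y n * transpose_mat M"
proof (rule eq_matI)
  fix i j assume i: "i < dim_row (M * gramM y n * transpose_mat M)" and j: "j < dim_col (M * gramM y n * transpose_mat M)"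
  then have i: "i < n" and j: "j < n" using M by auto
  have "gramM x n $$ (i,j) = x i \<bullet> x j" using i j by (simp add: gramM_def)
  also have "\<dots> = (\<Sum>l<n. \<Sum>k<n. M $$ (i,k) * (y k \<bullet> y l) * M $$ (j,l))"
    unfolding xy[OF i] xy[OF j] by (simp add: inner_sum_left inner_sum_right sum_distrib_left mult_ac)
  also have "\<dots> = (\<Sum>l<n. (\<Sum>k<n. M $$ (i,k) * (y k \<bullet> y l)) * M $$ (j,l))"
    by (simp add: sum_distrib_right)
  also have "\<dots> = (M * gramM y n * transpose_mat M) $$ (i,j)"
    using M i j by (simp add: scalar_prod_def gramM_def atLeast0LessThan)
  finally show "gramM x n $$ (i,j) = (M * gramM y n * transpose_mat M) $$ (i,j)" .
qed (use M in \<open>auto simp: gramM_def\<close>)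

lemma gram_transform_det:
  fixes x y :: "nat \<Rightarrow> 'a::euclidean_space"
  assumes M: "M \<in> carrier_mat n n"
    and xy: "\<And>i. i < n \<Longrightarrow> x i = (\<Sum>k<n. M $$ (i,k) *\<^sub>R y k)"
  shows "det (gramM x n) = (det M)^2 * det (gramM y n)"
proof -
  have G: "gramM y n \<in> carrier_mat n n" by (simp add: gramM_def)
  have eq: "gramM x n = M * gramM y n * transpose_mat M" by (rule gram_transform[OF M xy])
  have "det (gramM x n) = det (M * gramM y n) * det (transpose_mat M)"
    unfolding eq by (rule det_mult[where n=n]) (use M G in auto)
  also have "\<dots> = det M * det (gramM y n) * det M"
    using M G by (simp add: det_mult det_transpose)
  finally show ?thesis by (simp add: power2_eq_square)
qed

definition grp :: "'a::euclidean_space set \<Rightarrow> bool" where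
  "grp H \<longleftrightarrow> 0 \<in> H \<and> (\<forall>x\<in>H. \<forall>y\<in>H. x + y \<in> H) \<and> (\<forall>x\<in>H. -x \<in> H)"

lemma grp_neg: "grp H \<Longrightarrow> x \<in> H \<Longrightarrow> -x \<in> H"
  by (simp add: grp_def)

lemma grp_add: "grp H \<Longrightarrow> x \<in> H \<Longrightarrow> y \<in> H \<Longrightarrow> x + y \<in> H"
  by (simp add: grp_def)

lemma grp_Int: "grp A \<Longrightarrow> grp B \<Longrightarrow> grp (A \<inter> B)"
  by (simp add: grp_def)

lemma grp_diff: "grp H \<Longrightarrow> x \<in> H \<Longrightarrow> y \<in> H \<Longrightarrow> x - y \<in> H"
  unfolding grp_def by (metis diff_conv_add_uminus)

lemma grp_nat_mult: "grp H \<Longrightarrow> x \<in> H \<Longrightarrow> of_nat m *\<^sub>R x \<in> H"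
  by (induction m) (auto simp: grp_def algebra_simps)

lemma grp_int_mult:
  assumes "grp H" "x \<in> H" shows "of_int k *\<^sub>R x \<in> H"
proof (cases k rule: int_cases)
  case (nonneg m)
  then show ?thesis using grp_nat_mult[of H x m] assms by simp
next
  case (neg m)
  have "- (of_nat (Suc m) *\<^sub>R x) \<in> H" using grp_nat_mult[of H x "Suc m"] assms unfolding grp_def by blast
  moreover have "of_int k *\<^sub>R x = - (of_nat (Suc m) *\<^sub>R x)"
    using neg by (simp only: of_int_minus of_int_of_nat_eq scaleR_minus_left)
  ultimately show ?thesis by simp
qed

lemma int_span_memI: "v = (\<Sum>b\<in>B. of_int (c b) *\<^sub>R b) \<Longrightarrow> v \<in> int_span B"
  unfolding int_span_def by blast

lemma int_span_memE: "v \<in> int_span B \<Longrightarrow> (\<And>c. v = (\<Sum>b\<in>B. of_int (c b) *\<^sub>R b) \<Longrightarrow> P) \<Longrightarrow> P"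
  unfolding int_span_def by blast

lemma grp_sum: "grp H \<Longrightarrow> (\<And>i. i \<in> I \<Longrightarrow> f i \<in> H) \<Longrightarrow> sum f I \<in> H"
  by (induction I rule: infinite_finite_induct) (auto simp: grp_def)

lemma int_span_grp: "grp (int_span B)"
  unfolding grp_def
proof (intro conjI ballI)
  show "0 \<in> int_span B" by (rule int_span_memI[where c="\<lambda>_. 0"]) simp
next
  fix x y assume "x \<in> int_span B" "y \<in> int_span B"
  then obtain c1 c2 where "x = (\<Sum>b\<in>B. of_int (c1 b) *\<^sub>R b)" "y = (\<Sum>b\<in>B. of_int (c2 b) *\<^sub>R b)"
    by (blast elim: int_span_memE)
  then have "x + y = (\<Sum>b\<in>B. of_int (c1 b + c2 b) *\<^sub>R b)" by (simp add: sum.distrib scaleR_add_left)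
  then show "x + y \<in> int_span B" by (rule int_span_memI)
next
  fix x assume "x \<in> int_span B"
  then obtain c1 where "x = (\<Sum>b\<in>B. of_int (c1 b) *\<^sub>R b)" by (blast elim: int_span_memE)
  then have "-x = (\<Sum>b\<in>B. of_int (- c1 b) *\<^sub>R b)" by (simp add: sum_negf)
  then show "-x \<in> int_span B" by (rule int_span_memI)
qed

lemma int_span_sub: assumes "grp H" "B \<subseteq> H" shows "int_span B \<subseteq> H"
proof
  fix v assume "v \<in> int_span B"
  then obtain c where c: "v = (\<Sum>b\<in>B. of_int (c b) *\<^sub>R b)" by (blast elim: int_span_memE)
  show "v \<in> H" unfolding c using assms by (intro grp_sum grp_int_mult) auto
qed

lemma in_int_span: assumes "finite B" "b \<in> B" shows "b \<in> int_span B"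
proof (rule int_span_memI[where c="\<lambda>x. if x = b then 1 else 0"])
  have "(\<Sum>x\<in>B. of_int (if x = b then 1 else 0) *\<^sub>R x) = (\<Sum>x\<in>B. if x = b then x else 0)"
    by (rule sum.cong) auto
  also have "\<dots> = b" using assms by (simp add: sum.delta')
  finally show "b = (\<Sum>x\<in>B. of_int (if x = b then 1 else 0) *\<^sub>R x)" by simp
qed

lemma int_span_mono: "finite B \<Longrightarrow> A \<subseteq> B \<Longrightarrow> int_span A \<subseteq> int_span B"
  by (meson in_int_span int_span_grp int_span_sub subset_iff)

lemma int_span_span: "int_span B \<subseteq> span B"
proof
  fix v assume "v \<in> int_span B"
  then obtain c where c: "v = (\<Sum>b\<in>B. of_int (c b) *\<^sub>R b)" by (blast elim: int_span_memE)
  show "v \<in> span B" unfolding c by (intro span_sum span_scale span_base)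
qed

lemma int_span_empty: "int_span {} = {0}"
  unfolding int_span_def by simp

lemma subgroup_basis:
  fixes B0 :: "'a::euclidean_space set"
  assumes "finite B0" "independent B0" "grp H" "H \<subseteq> int_span B0"
  shows "\<exists>C. lattice_basis H C"
  using assms
proof (induction B0 arbitrary: H rule: finite_induct)
  case empty
  have "0 \<in> H" using empty.prems(2) unfolding grp_def by simp
  moreover have "H \<subseteq> {0}" using empty.prems(3) by (simp only: int_span_empty)
  ultimately have "H = {0}" by blast
  then have "lattice_basis H {}" unfolding lattice_basis_def int_span_empty by (simp add: independent_empty)
  then show ?case by blast
next
  case (insert b B0)
  define S where "S = insert b B0"
  have fS: "finite S" unfolding S_def using insert(1) by simp
  have indS: "independent S" unfolding S_def by (rule insert.prems(1))
  have indB0: "independent B0" using indS insert(2) unfolding S_def by (simp add: independent_insert)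
  have bnot: "b \<notin> span B0" using indS insert(2) unfolding S_def by (simp add: independent_insert)
  define R where "R v = representation S v b" for v
  have Rint: "\<exists>k. R v = of_int k \<and> v - of_int k *\<^sub>R b \<in> int_span B0" if vS: "v \<in> int_span S" for v
  proof -
    obtain c where c: "v = (\<Sum>x\<in>S. of_int (c x) *\<^sub>R x)" using vS by (blast elim: int_span_memE)
    have rs: "representation S (\<Sum>x\<in>S. of_int (c x) *\<^sub>R x) = (\<lambda>y. \<Sum>x\<in>S. representation S (of_int (c x) *\<^sub>R x) y)"
      by (rule representation_sum[OF indS]) (intro span_scale span_base)
    have rsc: "representation S (of_int (c x) *\<^sub>R x) = (\<lambda>y. of_int (c x) * representation S x y)" if "x \<in> S" for x
      by (rule representation_scale[OF indS span_base[OF that]])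
    have "R v = (\<Sum>x\<in>S. of_int (c x) * representation S x b)"
      unfolding R_def c rs by (intro sum.cong refl) (simp add: rsc)
    also have "\<dots> = (\<Sum>x\<in>S. of_int (c x) * (if b = x then 1 else 0))"
      by (intro sum.cong refl) (simp add: representation_basis[OF indS])
    also have "\<dots> = (\<Sum>x\<in>S. if b = x then of_int (c x) else 0)"
      by (rule sum.cong) auto
    also have "\<dots> = of_int (c b)" unfolding sum.delta'[OF fS] by (simp add: S_def)
    finally have 1: "R v = of_int (c b)" .
    have "v = of_int (c b) *\<^sub>R b + (\<Sum>x\<in>B0. of_int (c x) *\<^sub>R x)"
      using c unfolding S_def by (simp only: sum.insert[OF insert(1) insert(2)])
    then have "v - of_int (c b) *\<^sub>R b = (\<Sum>x\<in>B0. of_int (c x) *\<^sub>R x)" by simp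
    then have "v - of_int (c b) *\<^sub>R b \<in> int_span B0" by (rule int_span_memI)
    with 1 show ?thesis by blast
  qed
  have R0: "R v = 0" if "v \<in> span B0" for v
  proof -
    have "representation S v = representation B0 v"
      by (rule representation_extend[OF indS that]) (auto simp: S_def)
    moreover have "representation B0 v b = 0" using insert(2) representation_ne_zero[of B0 v b] by blast
    ultimately show ?thesis unfolding R_def by simp
  qed
  have spanS: "int_span S \<subseteq> span S" by (rule int_span_span)
  have Rlin: "R (v - of_int k *\<^sub>R u) = R v - of_int k * R u" if "v \<in> span S" "u \<in> span S" for v u k
  proof -
    have "representation S (v - of_int k *\<^sub>R u) = (\<lambda>x. representation S v x - representation S (of_int k *\<^sub>R u) x)"
      using representation_diff[OF indS span_scale[OF that(2)] that(1)] .
    moreover have "representation S (of_int k *\<^sub>R u) = (\<lambda>x. of_int k * representation S u x)"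
      using representation_scale[OF indS that(2)] .
    ultimately show ?thesis unfolding R_def by simp
  qed
  have HS: "H \<subseteq> int_span S" using insert S_def by simp
  show ?case
  proof (cases "\<forall>v\<in>H. R v = 0")
    case True
    have "H \<subseteq> int_span B0"
    proof
      fix v assume v: "v \<in> H"
      then obtain k where k: "R v = of_int k" "v - of_int k *\<^sub>R b \<in> int_span B0" using Rint HS by blast
      then have "k = 0" using True v by simp
      then show "v \<in> int_span B0" using k by simp
    qed
    then show ?thesis using insert.IH[OF indB0 insert.prems(2)] by blast
  next
    case False
    then obtain v where v: "v \<in> H" "R v \<noteq> 0" by blast
    obtain k where k: "R v = of_int k" using Rint HS v by blast
    define P where "P m \<longleftrightarrow> m > 0 \<and> (\<exists>h\<in>H. R h = real m)" for m :: nat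
    have "\<exists>m. P m"
    proof (cases "k > 0")
      case True
      then show ?thesis unfolding P_def using v k by (intro exI[of _ "nat k"]) auto
    next
      case False
      have "-v \<in> H" using v(1) insert.prems(2) by (simp add: grp_neg)
      moreover have "R (-v) = - R v" unfolding R_def using indS v HS spanS
        by (subst representation_neg) auto
      ultimately show ?thesis unfolding P_def using v k False by (intro exI[of _ "nat (-k)"]) auto
    qed
    define d where "d = (LEAST m. P m)"
    have Pd: "P d" unfolding d_def by (rule LeastI_ex) (rule \<open>\<exists>m. P m\<close>)
    have dmin: "\<And>m. P m \<Longrightarrow> d \<le> m" unfolding d_def by (rule Least_le)
    have d0: "d > 0" using Pd unfolding P_def by simp
    obtain h0 where h0': "h0 \<in> H" "R h0 = real d" using Pd unfolding P_def by blast
    note h0 = h0' d0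
    define H' where "H' = H \<inter> int_span B0"
    have gH': "grp H'" unfolding H'_def by (rule grp_Int[OF insert.prems(2) int_span_grp])
    obtain C' where C': "lattice_basis H' C'" using insert.IH[OF indB0 gH'] H'_def by blast
    have fC': "finite C'" and indC': "independent C'" and H'C': "H' = int_span C'"
      using C' unfolding lattice_basis_def by auto
    have C'sub: "C' \<subseteq> H'" using H'C' in_int_span fC' by blast
    have "C' \<subseteq> span B0" using C'sub H'_def int_span_span by blast
    then have spC': "span C' \<subseteq> span B0" by (simp add: span_minimal)
    have h0n: "h0 \<notin> span C'" using R0 h0 spC' by fastforce
    define C where "C = insert h0 C'"
    have fC: "finite C" using fC' C_def by simp
    have "h0 \<notin> C'" using h0n by (meson span_base)
    then have indC: "independent C" unfolding C_def by (simp add: independent_insert h0n indC')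
    have "H = int_span C"
    proof
      show "int_span C \<subseteq> H"
        using insert.prems(2) C'sub h0 H'_def C_def by (intro int_span_sub) auto
    next
      show "H \<subseteq> int_span C"
      proof
        fix v assume v: "v \<in> H"
        obtain k where k: "R v = of_int k" using Rint HS v by blast
        define q where "q = k div int d"
        define r where "r = k mod int d"
        have kqr: "k = q * int d + r" unfolding q_def r_def by simp
        have r0: "0 \<le> r" "r < int d" unfolding r_def using h0 by auto
        define w where "w = v - of_int q *\<^sub>R h0"
        have wH: "w \<in> H" unfolding w_def using insert.prems(2) v h0
          by (intro grp_diff grp_int_mult) auto
        have "R w = R v - of_int q * R h0" unfolding w_def
          using Rlin v h0 HS spanS by blast
        then have Rw: "R w = of_int r" using k h0 kqr by simp
        have "r = 0"
        proof (rule ccontr)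
          assume "r \<noteq> 0"
          then have "P (nat r)" unfolding P_def using wH Rw r0 by auto
          then show False using dmin r0 by fastforce
        qed
        then have "R w = 0" using Rw by simp
        then obtain k' where "R w = of_int k'" "w - of_int k' *\<^sub>R b \<in> int_span B0"
          using Rint HS wH by blast
        then have "w \<in> int_span B0" using \<open>R w = 0\<close> by simp
        then have "w \<in> int_span C'" using H'C' H'_def wH by blast
        then have wC: "w \<in> int_span C" using int_span_mono[OF fC, of C'] C_def by blast
        have "h0 \<in> int_span C" using in_int_span fC C_def by blast
        then have "of_int q *\<^sub>R h0 \<in> int_span C" using int_span_grp grp_int_mult by blast
        then have "w + of_int q *\<^sub>R h0 \<in> int_span C" using wC int_span_grp grp_def by blast
        then show "v \<in> int_span C" unfolding w_def by simp
      qed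
    qed
    then show ?thesis using fC indC lattice_basis_def by blast
  qed
qed

lemma coords_real:
  fixes x :: "nat \<Rightarrow> 'a::euclidean_space"
  assumes f: "bij_betw f {0..<n} S" and x: "\<And>i. i < n \<Longrightarrow> x i \<in> span S"
  shows "\<exists>M. M \<in> carrier_mat n n \<and> (\<forall>i<n. x i = (\<Sum>k<n. M $$ (i,k) *\<^sub>R f k))"
proof -
  have fS: "finite S" using f bij_betw_finite by blast
  have "\<forall>i. \<exists>r. i < n \<longrightarrow> x i = (\<Sum>v\<in>S. r v *\<^sub>R v)"
  proof
    fix i show "\<exists>r. i < n \<longrightarrow> x i = (\<Sum>v\<in>S. r v *\<^sub>R v)"
    proof (cases "i < n")
      case True
      then have "x i \<in> range (\<lambda>u. \<Sum>v\<in>S. u v *\<^sub>R v)" using x span_finite[OF fS] by blast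
      then show ?thesis by auto
    qed auto
  qed
  then obtain r where r: "\<And>i. i < n \<Longrightarrow> x i = (\<Sum>v\<in>S. r i v *\<^sub>R v)" by metis
  define M where "M = mat n n (\<lambda>(i,k). r i (f k))"
  have "x i = (\<Sum>k<n. M $$ (i,k) *\<^sub>R f k)" if i: "i < n" for i
  proof -
    have "x i = (\<Sum>v\<in>S. r i v *\<^sub>R v)" using r i by blast
    also have "\<dots> = (\<Sum>k\<in>{0..<n}. r i (f k) *\<^sub>R f k)"
      by (rule sum.reindex_bij_betw[OF f, symmetric])
    also have "\<dots> = (\<Sum>k<n. M $$ (i,k) *\<^sub>R f k)"
      unfolding M_def using i by (auto simp: atLeast0LessThan intro!: sum.cong)
    finally show ?thesis .
  qed
  moreover have "M \<in> carrier_mat n n" unfolding M_def by simp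
  ultimately show ?thesis by blast
qed

lemma coords_int:
  fixes x :: "nat \<Rightarrow> 'a::euclidean_space"
  assumes f: "bij_betw f {0..<n} S" and x: "\<And>i. i < n \<Longrightarrow> x i \<in> int_span S"
  shows "\<exists>M::int mat. M \<in> carrier_mat n n \<and> (\<forall>i<n. x i = (\<Sum>k<n. of_int (M $$ (i,k)) *\<^sub>R f k))"
proof -
  have "\<forall>i. \<exists>r. i < n \<longrightarrow> x i = (\<Sum>v\<in>S. of_int (r v) *\<^sub>R v)"
  proof
    fix i show "\<exists>r. i < n \<longrightarrow> x i = (\<Sum>v\<in>S. of_int (r v) *\<^sub>R v)"
    proof (cases "i < n")
      case True
      then show ?thesis using x[OF True] by (blast elim: int_span_memE)
    qed auto
  qed
  then obtain r where r: "\<And>i. i < n \<Longrightarrow> x i = (\<Sum>v\<in>S. of_int (r i v) *\<^sub>R v)" by metis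
  define M where "M = mat n n (\<lambda>(i,k). r i (f k))"
  have "x i = (\<Sum>k<n. of_int (M $$ (i,k)) *\<^sub>R f k)" if i: "i < n" for i
  proof -
    have "x i = (\<Sum>v\<in>S. of_int (r i v) *\<^sub>R v)" using r i by blast
    also have "\<dots> = (\<Sum>k\<in>{0..<n}. of_int (r i (f k)) *\<^sub>R f k)"
      by (rule sum.reindex_bij_betw[OF f, symmetric])
    also have "\<dots> = (\<Sum>k<n. of_int (M $$ (i,k)) *\<^sub>R f k)"
      unfolding M_def using i by (auto simp: atLeast0LessThan intro!: sum.cong)
    finally show ?thesis .
  qed
  moreover have "M \<in> carrier_mat n n" unfolding M_def by simp
  ultimately show ?thesis by blast
qed

lemma gram_nonneg:
  fixes C :: "'a::euclidean_space set"
  assumes ind: "independent C"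
  shows "0 \<le> gram_det C"
proof -
  have fC: "finite C" using ind by (simp add: finiteI_independent)
  define n where "n = card C"
  obtain e where e: "bij_betw e {0..<n} C" using ex_bij_betw_nat_finite[OF fC] n_def by blast
  obtain U where U: "U \<subseteq> span C" "pairwise real_inner_class.orthogonal U" "\<And>x. x \<in> U \<Longrightarrow> norm x = 1"
    "independent U" "card U = dim (span C)" "span U = span C"
    using orthonormal_basis_subspace[OF subspace_span[of C]] by metis
  have cU: "card U = n" using U(5) ind n_def by (simp add: dim_eq_card_independent)
  have fU: "finite U" using U(4) by (simp add: finiteI_independent)
  obtain f where f: "bij_betw f {0..<n} U" using ex_bij_betw_nat_finite[OF fU] cU by blast
  have eU: "e i \<in> span U" if "i < n" for i
  proof -
    have "e i \<in> C" using bij_betwE[OF e] that by simp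
    then show ?thesis using U(6) span_base by blast
  qed
  from coords_real[where x=e, OF f eU] obtain M where M1: "M \<in> carrier_mat n n" and M2: "\<forall>i<n. e i = (\<Sum>k<n. M $$ (i,k) *\<^sub>R f k)"
    by blast
  have M: "M \<in> carrier_mat n n" "\<And>i. i < n \<Longrightarrow> e i = (\<Sum>k<n. M $$ (i,k) *\<^sub>R f k)"
    using M1 M2 by auto
  have "gramM f n = 1\<^sub>m n"
  proof (rule eq_matI)
    fix i j assume ij: "i < dim_row (1\<^sub>m n)" "j < dim_col (1\<^sub>m n)"
    then have i: "i < n" and j: "j < n" by auto
    have fi: "f i \<in> U" "f j \<in> U" using bij_betwE[OF f] i j by auto
    have "f i \<bullet> f j = (if i = j then 1 else 0)"
    proof (cases "i = j")
      case True
      then show ?thesis using U(3)[OF fi(1)] by (simp add: norm_eq_1)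
    next
      case False
      then have "f i \<noteq> f j" using f i j unfolding bij_betw_def inj_on_def by auto
      then show ?thesis using U(2) fi False unfolding pairwise_def real_inner_class.orthogonal_def by auto
    qed
    then show "gramM f n $$ (i,j) = 1\<^sub>m n $$ (i,j)" using i j by (simp add: gramM_def)
  qed (auto simp: gramM_def)
  then have "det (gramM f n) = 1" by simp
  then have "det (gramM e n) = (det M)^2" using gram_transform_det[OF M(1) M(2)] by simp
  then show ?thesis using gram_det_eq[OF e] by simp
qed

lemma gram_mono:
  fixes C1 C2 :: "'a::euclidean_space set"
  assumes b1: "lattice_basis H1 C1" and b2: "lattice_basis H2 C2" and sub: "H1 \<subseteq> H2"
    and card: "card C1 = card C2"
  shows "gram_det C2 \<le> gram_det C1"
proof -
  have fC1: "finite C1" and ind1: "independent C1" and H1: "H1 = int_span C1"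
    using b1 unfolding lattice_basis_def by auto
  have fC2: "finite C2" and ind2: "independent C2" and H2: "H2 = int_span C2"
    using b2 unfolding lattice_basis_def by auto
  define n where "n = card C1"
  obtain e where e: "bij_betw e {0..<n} C1" using ex_bij_betw_nat_finite[OF fC1] n_def by blast
  obtain f where f: "bij_betw f {0..<n} C2" using ex_bij_betw_nat_finite[OF fC2] n_def card by metis
  have eC2: "e i \<in> int_span C2" if "i < n" for i
  proof -
    have "e i \<in> C1" using bij_betwE[OF e] that by simp
    then have "e i \<in> H1" using H1 in_int_span[OF fC1] by blast
    then show ?thesis using sub H2 by blast
  qed
  from coords_int[where x=e, OF f eC2] obtain Mi :: "int mat" where Mi1: "Mi \<in> carrier_mat n n"
    and Mi2: "\<forall>i<n. e i = (\<Sum>k<n. of_int (Mi $$ (i,k)) *\<^sub>R f k)"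
    by blast
  have Mi: "Mi \<in> carrier_mat n n" "\<And>i. i < n \<Longrightarrow> e i = (\<Sum>k<n. of_int (Mi $$ (i,k)) *\<^sub>R f k)"
    using Mi1 Mi2 by auto
  define M :: "real mat" where "M = map_mat of_int Mi"
  have M: "M \<in> carrier_mat n n" using Mi(1) M_def by simp
  have eM: "e i = (\<Sum>k<n. M $$ (i,k) *\<^sub>R f k)" if "i < n" for i
    using Mi that unfolding M_def by (auto intro!: sum.cong)
  have detM: "det M = of_int (det Mi)" unfolding M_def by (rule of_int_hom.hom_det)
  have "det Mi \<noteq> 0"
  proof
    assume "det Mi = 0"
    then have "det (transpose_mat Mi) = 0" using det_transpose[OF Mi(1)] by simp
    then obtain v where v: "v \<in> carrier_vec n" "v \<noteq> 0\<^sub>v n" "transpose_mat Mi *\<^sub>v v = 0\<^sub>v n"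
      using det_0_iff_vec_prod_zero[of "transpose_mat Mi" n] Mi(1) by auto
    have colk: "(\<Sum>i<n. Mi $$ (i,k) * vec_index v i) = 0" if k: "k < n" for k
    proof -
      have "vec_index (transpose_mat Mi *\<^sub>v v) k = 0" using v(3) k by simp
      then show ?thesis using Mi(1) v(1) k
        by (simp add: scalar_prod_def atLeast0LessThan row_def)
    qed
    have "(\<Sum>i<n. of_int (vec_index v i) *\<^sub>R e i) = (\<Sum>i<n. \<Sum>k<n. of_int (vec_index v i) *\<^sub>R (of_int (Mi $$ (i,k)) *\<^sub>R f k))"
      using Mi(2) by (simp add: scaleR_sum_right)
    also have "\<dots> = (\<Sum>k<n. \<Sum>i<n. of_int (Mi $$ (i,k) * vec_index v i) *\<^sub>R f k)"
      by (subst sum.swap) (simp add: mult.commute)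
    also have "\<dots> = (\<Sum>k<n. of_int (\<Sum>i<n. Mi $$ (i,k) * vec_index v i) *\<^sub>R f k)"
      by (simp add: scaleR_sum_left)
    also have "\<dots> = 0" using colk by simp
    finally have sum0: "(\<Sum>i<n. of_int (vec_index v i) *\<^sub>R e i) = 0" .
    define c where "c x = (of_int (vec_index v (inv_into {0..<n} e x)) :: real)" for x
    have "(\<Sum>x\<in>C1. c x *\<^sub>R x) = (\<Sum>i\<in>{0..<n}. c (e i) *\<^sub>R e i)"
      by (rule sum.reindex_bij_betw[OF e, symmetric])
    also have "\<dots> = (\<Sum>i<n. of_int (vec_index v i) *\<^sub>R e i)"
      using e unfolding c_def bij_betw_def by (auto simp: atLeast0LessThan intro!: sum.cong)
    finally have "(\<Sum>x\<in>C1. c x *\<^sub>R x) = 0" using sum0 by simp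
    then have c0: "\<forall>x\<in>C1. c x = 0" using ind1 fC1 by (simp add: independent_explicit)
    have "v = 0\<^sub>v n"
    proof (rule eq_vecI)
      fix i assume "i < dim_vec (0\<^sub>v n)"
      then have i: "i < n" by simp
      have "e i \<in> C1" using bij_betwE[OF e] i by simp
      then have "c (e i) = 0" using c0 by blast
      moreover have "inv_into {0..<n} e (e i) = i" using e i unfolding bij_betw_def by simp
      ultimately show "vec_index v i = vec_index (0\<^sub>v n) i" using i unfolding c_def by simp
    qed (use v(1) in simp)
    then show False using v(2) by simp
  qed
  then have p0: "0 < (det Mi)^2" by simp
  have p1: "1 \<le> (det Mi)^2" using p0 by linarith
  have d1: "1 \<le> (det M)^2" unfolding detM using p1 by (metis of_int_1_le_iff of_int_power)
  have g0: "0 \<le> det (gramM f n)" using gram_nonneg[OF ind2] gram_det_eq[OF f] by simp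
  have "det (gramM e n) = (det M)^2 * det (gramM f n)" by (rule gram_transform_det[OF M eM])
  then have "det (gramM f n) \<le> det (gramM e n)" using mult_right_mono[OF d1 g0] by simp
  then show ?thesis using gram_det_eq[OF e] gram_det_eq[OF f] by simp
qed

lemma tproj_eq:
  assumes g: "grp L"
  shows "tproj L x = tproj L y \<longleftrightarrow> y - x \<in> L"
proof
  assume eq: "tproj L x = tproj L y"
  have "y \<in> tproj L y" unfolding tproj_def using g by (force simp: grp_def)
  then have "y \<in> tproj L x" using eq by simp
  then obtain u where "u \<in> L" "y = x + u" unfolding tproj_def by auto
  then show "y - x \<in> L" by simp
next
  assume d: "y - x \<in> L"
  show "tproj L x = tproj L y"
  proof
    show "tproj L x \<subseteq> tproj L y"
    proof
      fix z assume "z \<in> tproj L x"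
      then obtain u where u: "u \<in> L" "z = x + u" unfolding tproj_def by auto
      have "u - (y - x) \<in> L" using grp_diff[OF g u(1) d] .
      moreover have "z = y + (u - (y - x))" using u by simp
      ultimately show "z \<in> tproj L y" unfolding tproj_def by blast
    qed
  next
    show "tproj L y \<subseteq> tproj L x"
    proof
      fix z assume "z \<in> tproj L y"
      then obtain u where u: "u \<in> L" "z = y + u" unfolding tproj_def by auto
      have "u + (y - x) \<in> L" using grp_add[OF g u(1) d] .
      moreover have "z = x + (u + (y - x))" using u by simp
      ultimately show "z \<in> tproj L x" unfolding tproj_def by blast
    qed
  qed
qed

lemma tproj_add: "grp L \<Longrightarrow> u \<in> L \<Longrightarrow> tproj L (x + u) = tproj L x"
  using tproj_eq[of L "x + u" x] grp_neg[of L u] by simp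

lemma openin_torus: "openin (torus_top L) U \<longleftrightarrow> U \<subseteq> range (tproj L) \<and> open (tproj L -` U)"
  unfolding torus_top_def by (subst topology_inverse'[OF istopology_torus]) simp

lemma topspace_torus: "topspace (torus_top L) = range (tproj L)"
proof -
  have "tproj L -` range (tproj L) = UNIV" by auto
  then have "openin (torus_top L) (range (tproj L))" unfolding openin_torus by simp
  then have "range (tproj L) \<subseteq> topspace (torus_top L)" by (rule openin_subset)
  moreover have "topspace (torus_top L) \<subseteq> range (tproj L)"
    using openin_torus[of L "topspace (torus_top L)"] by simp
  ultimately show ?thesis by blast
qed

lemma continuous_tproj: "continuous_map euclidean (torus_top L) (tproj L)"
  unfolding continuous_map topspace_torus openin_torus by (auto simp: vimage_def)

lemma openin_torus_image:
  assumes g: "grp L" and W: "open W"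
  shows "openin (torus_top L) (tproj L ` W)"
proof -
  have "tproj L -` (tproj L ` W) = (\<Union>u\<in>L. (\<lambda>x. u + x) ` W)"
  proof
    show "tproj L -` tproj L ` W \<subseteq> (\<Union>u\<in>L. (\<lambda>x. u + x) ` W)"
    proof
      fix y assume "y \<in> tproj L -` tproj L ` W"
      then obtain w where w: "w \<in> W" "tproj L y = tproj L w" by auto
      then have "y - w \<in> L" using tproj_eq[OF g] by metis
      moreover have "y = (y - w) + w" by simp
      ultimately show "y \<in> (\<Union>u\<in>L. (\<lambda>x. u + x) ` W)" using w(1) by blast
    qed
  next
    show "(\<Union>u\<in>L. (\<lambda>x. u + x) ` W) \<subseteq> tproj L -` tproj L ` W"
    proof
      fix y assume "y \<in> (\<Union>u\<in>L. (\<lambda>x. u + x) ` W)"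
      then obtain u w where uw: "u \<in> L" "w \<in> W" "y = u + w" by blast
      then have "tproj L y = tproj L w" using tproj_add[OF g uw(1), of w] by (simp add: add.commute)
      then show "y \<in> tproj L -` tproj L ` W" using uw(2) by blast
    qed
  qed
  moreover have "open (\<Union>u\<in>L. (\<lambda>x. u + x) ` W)"
    using W by (intro open_UN ballI open_translation)
  ultimately show ?thesis unfolding openin_torus by auto
qed

lemma cell_props:
  fixes s :: "'a::euclidean_space set"
  assumes "is_cell s"
  shows "connected s" "closed s"
proof -
  obtain k D and S :: "'a set" and h g where S: "subspace S" and "dim S = k" and hm: "homeomorphism (cball 0 1 \<inter> S) s h g"
    and "D = h ` (sphere 0 1 \<inter> S)"
    using assms unfolding is_cell_def cell_bd_def by blast
  have cont: "continuous_on (cball 0 1 \<inter> S) h" and img: "h ` (cball 0 1 \<inter> S) = s"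
    using hm unfolding homeomorphism_def by auto
  have "convex (cball (0::'a) 1 \<inter> S)" using S by (intro convex_Int convex_cball subspace_imp_convex)
  then have "connected (cball (0::'a) 1 \<inter> S)" by (rule convex_connected)
  then show "connected s" using connected_continuous_image[OF cont] img by metis
  have "compact (cball (0::'a) 1 \<inter> S)" using S by (intro compact_Int_closed compact_cball closed_subspace)
  then have "compact s" using compact_continuous_image[OF cont] img by metis
  then show "closed s" by (rule compact_imp_closed)
qed

lemma comp_transl:
  fixes Q :: "'a::euclidean_space set"
  assumes c: "c \<in> components Q" and Q1: "\<And>x. x \<in> Q \<Longrightarrow> x + u \<in> Q" and Q2: "\<And>x. x \<in> Q \<Longrightarrow> x - u \<in> Q"
  shows "(\<lambda>x. x + u) ` c \<in> components Q"
proof -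
  have cne: "c \<noteq> {}" "c \<subseteq> Q" "connected c" using in_components_nonempty[OF c] in_components_subset[OF c] in_components_connected[OF c] by auto
  show ?thesis unfolding in_components_maximal
  proof (intro conjI allI impI)
    show "(\<lambda>x. x + u) ` c \<noteq> {}" using cne by simp
    show "(\<lambda>x. x + u) ` c \<subseteq> Q" using cne Q1 by auto
    show "connected ((\<lambda>x. x + u) ` c)" using cne(3)
      by (intro connected_continuous_image continuous_intros)
    fix D assume D: "D \<noteq> {} \<and> (\<lambda>x. x + u) ` c \<subseteq> D \<and> D \<subseteq> Q \<and> connected D"
    define D' where "D' = (\<lambda>x. x - u) ` D"
    have "c \<subseteq> D'"
    proof
      fix x assume "x \<in> c"
      then have "x + u \<in> D" using D by auto
      then show "x \<in> D'" unfolding D'_def by (metis add_diff_cancel image_eqI)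
    qed
    moreover have "D' \<subseteq> Q" using D Q2 unfolding D'_def by auto
    moreover have "connected D'" unfolding D'_def using D
      by (intro connected_continuous_image continuous_intros) auto
    ultimately have "D' = c" using c cne unfolding in_components_maximal by blast
    then have "(\<lambda>x. x + u) ` D' = (\<lambda>x. x + u) ` c" by simp
    moreover have "(\<lambda>x. x + u) ` D' = D" unfolding D'_def image_image by simp
    ultimately show "D = (\<lambda>x. x + u) ` c" by simp
  qed
qed

lemma cc_cells: assumes "cell_complex K" "s \<in> K" shows "is_cell s"
proof -
  have "\<forall>s\<in>K. is_cell s" using assms(1) unfolding cell_complex_def by (rule conjunct1)
  then show ?thesis using assms(2) by (rule bspec)
qed

lemma cc_locfin: assumes "cell_complex K" shows "\<exists>e>0. finite {s\<in>K. s \<inter> ball x e \<noteq> {}}"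
proof -
  have "\<forall>x. \<exists>e>0. finite {s\<in>K. s \<inter> ball x e \<noteq> {}}"
    using assms unfolding cell_complex_def by (rule conjunct1[OF conjunct2])
  then show ?thesis by (rule spec)
qed

lemma shadow_translate:
  fixes K :: "'a::euclidean_space set set" and L :: "'a set"
  assumes g: "grp L" and cc: "cell_complex K" and pc: "periodic_complex K L" and pf: "periodic_filter K F L"
    and G: "G \<in> connected_components_of (subtopology (torus_top L) (quot_sublevel K F L r))"
    and h: "h \<in> components (tproj L -` G)" and h': "h' \<in> components (tproj L -` G)"
  shows "\<exists>u\<in>L. h' = (\<lambda>x. x + u) ` h"
proof -
  define \<tau> where "\<tau> = tproj L"
  define P where "P = \<Union>{s\<in>K. F s \<le> r}"
  define X where "X = quot_sublevel K F L r"
  define Q where "Q = \<tau> -` G"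
  have X: "X = \<tau> ` P" unfolding X_def quot_sublevel_def \<tau>_def P_def by simp
  have cells: "is_cell s" if "s \<in> K" for s using cc_cells[OF cc that] .
  have PX: "x \<in> P" if tx: "\<tau> x \<in> X" for x
  proof -
    obtain p where p: "p \<in> P" "\<tau> x = \<tau> p" using tx X by auto
    have d: "x - p \<in> L" using p(2) tproj_eq[OF g, of p x] unfolding \<tau>_def by simp
    obtain s where s: "s \<in> K" "F s \<le> r" "p \<in> s" using p(1) unfolding P_def by blast
    have s': "(\<lambda>y. y + (x - p)) ` s \<in> K" using pc s(1) d unfolding periodic_complex_def by simp
    have "F ((\<lambda>y. y + (x - p)) ` s) = F s" using pf s(1) d unfolding periodic_filter_def by simp
    moreover have "x \<in> (\<lambda>y. y + (x - p)) ` s"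
    proof (rule image_eqI)
      show "x = p + (x - p)" by simp
    qed (rule s(3))
    ultimately show "x \<in> P" unfolding P_def using s' s(2) by auto
  qed
  have Gsub: "G \<subseteq> range \<tau> \<inter> X"
    using connected_components_of_subset[OF G] unfolding topspace_subtopology topspace_torus \<tau>_def X_def .
  have Gne: "G \<noteq> {}" using nonempty_connected_components_of[OF G] .
  have Gconn: "connectedin (torus_top L) G"
    using connectedin_connected_components_of[OF G] connectedin_subtopology by blast
  have QP: "Q \<subseteq> P" using Gsub PX unfolding Q_def by blast
  have Qinv: "x + u \<in> Q" if "x \<in> Q" "u \<in> L" for x u
    using that tproj_add[OF g] unfolding Q_def \<tau>_def by simp
  have Qinv': "x - u \<in> Q" if "x \<in> Q" "u \<in> L" for x u
    using Qinv[OF that(1) grp_neg[OF g that(2)]] by simp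
  have cellQ: "s \<subseteq> Q" if s: "s \<in> K" "F s \<le> r" "x \<in> s" "x \<in> Q" for s x
  proof -
    have "connected s" using cell_props(1)[OF cells[OF s(1)]] .
    then have "connectedin (torus_top L) (\<tau> ` s)"
      unfolding \<tau>_def by (intro connectedin_continuous_map_image[OF continuous_tproj]) simp
    moreover have "\<tau> ` s \<subseteq> X" unfolding X P_def using s by blast
    ultimately have "connectedin (subtopology (torus_top L) X) (\<tau> ` s)"
      by (simp add: connectedin_subtopology)
    moreover have "\<not> disjnt G (\<tau> ` s)" using s(3,4) unfolding Q_def disjnt_def by blast
    ultimately have "\<tau> ` s \<subseteq> G" using connected_components_of_maximal[OF G[folded X_def]] by blast
    then show ?thesis unfolding Q_def by blast
  qed
  have local: "\<exists>e>0. \<forall>y\<in>Q. dist y x < e \<longrightarrow> y \<in> connected_component_set Q x" if x: "x \<in> Q" for x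
  proof -
    obtain e0 where e0: "e0 > 0" "finite {s\<in>K. s \<inter> ball x e0 \<noteq> {}}"
      using cc_locfin[OF cc, of x] by blast
    define E where "E = {s\<in>K. s \<inter> ball x e0 \<noteq> {} \<and> x \<notin> s}"
    have fE: "finite E" using e0(2) unfolding E_def by (rule rev_finite_subset) blast
    have "closed (\<Union>E)" using fE cells cell_props(2) unfolding E_def by auto
    moreover have "x \<notin> \<Union>E" unfolding E_def by blast
    ultimately obtain e1 where e1: "e1 > 0" "ball x e1 \<subseteq> - \<Union>E"
      using open_contains_ball[of "- \<Union>E"] by blast
    show ?thesis
    proof (intro exI[of _ "min e0 e1"] conjI ballI impI)
      show "0 < min e0 e1" using e0 e1 by simp
      fix y assume y: "y \<in> Q" "dist y x < min e0 e1"
      obtain s where s: "s \<in> K" "F s \<le> r" "y \<in> s" using QP y(1) unfolding P_def by blast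
      have yb: "y \<in> ball x e0" "y \<in> ball x e1" using y(2) by (auto simp: dist_commute)
      have "x \<in> s"
      proof (rule ccontr)
        assume "x \<notin> s"
        then have "s \<in> E" unfolding E_def using s yb by blast
        then show False using e1(2) yb(2) s(3) by blast
      qed
      then have "s \<subseteq> Q" using cellQ s x by blast
      then have "s \<subseteq> connected_component_set Q x"
        using connected_component_maximal[OF \<open>x \<in> s\<close> cell_props(1)[OF cells[OF s(1)]]] by blast
      then show "y \<in> connected_component_set Q x" using s(3) by blast
    qed
  qed
  define H where "H = (\<Union>u\<in>L. (\<lambda>x. x + u) ` h)"
  have hQ: "h \<in> components Q" using h unfolding Q_def \<tau>_def .
  have h'Q: "h' \<in> components Q" using h' unfolding Q_def \<tau>_def .
  have trans: "(\<lambda>x. x + u) ` h \<in> components Q" if "u \<in> L" for u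
    using comp_transl[OF hQ] Qinv Qinv' that by blast
  have HQ: "H \<subseteq> Q" unfolding H_def using trans in_components_subset by blast
  have Hinv: "y + v \<in> H" if yv: "y \<in> H" "v \<in> L" for y v
  proof -
    obtain u x where ux: "u \<in> L" "x \<in> h" "y = x + u" using yv(1) unfolding H_def by blast
    have "u + v \<in> L" using grp_add[OF g ux(1) yv(2)] .
    moreover have "y + v = x + (u + v)" using ux by (simp add: add.assoc)
    ultimately show ?thesis unfolding H_def using ux(2) by blast
  qed
  have hH: "h \<subseteq> H"
  proof -
    have "0 \<in> L" using g grp_def by blast
    then show ?thesis unfolding H_def by force
  qed
  have compH: "connected_component_set Q x \<subseteq> H" if xH: "x \<in> H" for x
  proof -
    obtain u where u: "u \<in> L" "x \<in> (\<lambda>x. x + u) ` h" using xH unfolding H_def by blast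
    have xQ: "x \<in> Q" using xH HQ by blast
    have "x \<in> connected_component_set Q x" using xQ by simp
    then have "connected_component_set Q x \<inter> (\<lambda>x. x + u) ` h \<noteq> {}" using u(2) by blast
    then have "connected_component_set Q x = (\<lambda>x. x + u) ` h"
      using components_eq[OF componentsI[OF xQ] trans[OF u(1)]] by blast
    then show ?thesis unfolding H_def using u(1) by blast
  qed
  have compnH: "connected_component_set Q x \<inter> H = {}" if "x \<in> Q" "x \<notin> H" for x
  proof (rule ccontr)
    assume "connected_component_set Q x \<inter> H \<noteq> {}"
    then obtain u where u: "u \<in> L" "connected_component_set Q x \<inter> (\<lambda>x. x + u) ` h \<noteq> {}"
      unfolding H_def by blast
    then have "connected_component_set Q x = (\<lambda>x. x + u) ` h"
      using components_eq[OF componentsI[OF that(1)] trans[OF u(1)]] by blast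
    then have "x \<in> H" unfolding H_def using u(1) that(1) by (metis UN_I connected_component_refl_eq mem_Collect_eq)
    then show False using that(2) by blast
  qed
  have oH: "openin (top_of_set Q) H"
    unfolding openin_euclidean_subtopology_iff
  proof (intro conjI ballI)
    show "H \<subseteq> Q" by (rule HQ)
    fix x assume x: "x \<in> H"
    obtain e where e: "e > 0" "\<forall>y\<in>Q. dist y x < e \<longrightarrow> y \<in> connected_component_set Q x"
      using local HQ x by blast
    then show "\<exists>e>0. \<forall>x'\<in>Q. dist x' x < e \<longrightarrow> x' \<in> H" using compH[OF x] by blast
  qed
  have oQH: "openin (top_of_set Q) (Q - H)"
    unfolding openin_euclidean_subtopology_iff
  proof (intro conjI ballI)
    show "Q - H \<subseteq> Q" by blast
    fix x assume x: "x \<in> Q - H"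
    obtain e where e: "e > 0" "\<forall>y\<in>Q. dist y x < e \<longrightarrow> y \<in> connected_component_set Q x"
      using local x by blast
    then show "\<exists>e>0. \<forall>x'\<in>Q. dist x' x < e \<longrightarrow> x' \<in> Q - H" using compnH x by blast
  qed
  obtain W1 where W1: "open W1" "H = Q \<inter> W1" using oH unfolding openin_open by blast
  obtain W2 where W2: "open W2" "Q - H = Q \<inter> W2" using oQH unfolding openin_open by blast
  have E1: "openin (torus_top L) (\<tau> ` W1)" unfolding \<tau>_def by (rule openin_torus_image[OF g W1(1)])
  have E2: "openin (torus_top L) (\<tau> ` W2)" unfolding \<tau>_def by (rule openin_torus_image[OF g W2(1)])
  have cover: "G \<subseteq> \<tau> ` W1 \<union> \<tau> ` W2"
  proof
    fix z assume z: "z \<in> G"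
    then obtain x where x: "z = \<tau> x" using Gsub by blast
    then have "x \<in> Q" unfolding Q_def using z by simp
    then have "x \<in> W1 \<or> x \<in> W2" using W1(2) W2(2) by blast
    then show "z \<in> \<tau> ` W1 \<union> \<tau> ` W2" using x by blast
  qed
  have disj: "\<tau> ` W1 \<inter> \<tau> ` W2 \<inter> G = {}"
  proof (rule ccontr)
    assume "\<tau> ` W1 \<inter> \<tau> ` W2 \<inter> G \<noteq> {}"
    then obtain w1 w2 where w: "w1 \<in> W1" "w2 \<in> W2" "\<tau> w1 = \<tau> w2" "\<tau> w1 \<in> G" by auto
    have "w1 \<in> Q" "w2 \<in> Q" unfolding Q_def using w by auto
    then have w1H: "w1 \<in> H" and w2H: "w2 \<notin> H" using W1(2) W2(2) w by auto
    have "w2 - w1 \<in> L" using w(3) tproj_eq[OF g] unfolding \<tau>_def by blast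
    then have "w1 + (w2 - w1) \<in> H" using Hinv[OF w1H] by blast
    then show False using w2H by simp
  qed
  have ne1: "\<tau> ` W1 \<inter> G \<noteq> {}"
  proof -
    obtain x0 where x0: "x0 \<in> h" using in_components_nonempty[OF hQ] by blast
    then have "x0 \<in> H" "x0 \<in> Q" using hH HQ by auto
    then have "x0 \<in> W1" "\<tau> x0 \<in> G" using W1(2) unfolding Q_def by auto
    then show ?thesis by blast
  qed
  have e2: "\<tau> ` W2 \<inter> G = {}"
    using Gconn E1 E2 cover disj ne1 unfolding connectedin by blast
  have "h' \<subseteq> H"
  proof
    fix y assume y: "y \<in> h'"
    then have yQ: "y \<in> Q" using in_components_subset[OF h'Q] by blast
    show "y \<in> H"
    proof (rule ccontr)
      assume "y \<notin> H"
      then have "y \<in> W2" using W2(2) yQ by blast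
      moreover have "\<tau> y \<in> G" using yQ unfolding Q_def by simp
      ultimately show False using e2 by blast
    qed
  qed
  then obtain y0 u where y0: "y0 \<in> h'" "u \<in> L" "y0 \<in> (\<lambda>x. x + u) ` h"
    using in_components_nonempty[OF h'Q] unfolding H_def by blast
  then have "h' = (\<lambda>x. x + u) ` h" using components_eq[OF h'Q trans[OF y0(2)]] by blast
  then show ?thesis using y0(2) by blast
qed

lemma lattice_basis_dim:
  assumes b: "lattice_basis H C"
  shows "dim H = card C"
proof -
  have fC: "finite C" and ind: "independent C" and HC: "H = int_span C"
    using b unfolding lattice_basis_def by auto
  have "C \<subseteq> H" using HC in_int_span[OF fC] by blast
  then have 1: "span C \<subseteq> span H" by (rule span_mono)
  have "H \<subseteq> span C" using HC int_span_span by blast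
  then have 2: "span H \<subseteq> span C" by (simp add: span_minimal)
  have "dim H = dim (span H)" by simp
  also have "\<dots> = dim (span C)" using 1 2 by simp
  also have "\<dots> = card C" using ind by (simp add: dim_eq_card_independent)
  finally show ?thesis .
qed

definition stab :: "'a::euclidean_space set \<Rightarrow> 'a set \<Rightarrow> 'a set" where
  "stab L g = {u\<in>L. (\<lambda>x. x + u) ` g = g}"

lemma stab_grp:
  assumes g: "grp L" shows "grp (stab L G)"
  unfolding grp_def stab_def
proof (intro conjI ballI)
  show "0 \<in> {u \<in> L. (\<lambda>x. x + u) ` G = G}" using g by (simp add: grp_def)
next
  fix x y assume x: "x \<in> {u \<in> L. (\<lambda>x. x + u) ` G = G}" and y: "y \<in> {u \<in> L. (\<lambda>x. x + u) ` G = G}"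
  have "(\<lambda>z. z + (x + y)) ` G = (\<lambda>z. z + x) ` ((\<lambda>z. z + y) ` G)" by (simp add: image_image algebra_simps)
  then show "x + y \<in> {u \<in> L. (\<lambda>x. x + u) ` G = G}" using x y grp_add[OF g] by auto
next
  fix x assume x: "x \<in> {u \<in> L. (\<lambda>x. x + u) ` G = G}"
  have "(\<lambda>z. z + - x) ` G = (\<lambda>z. z + - x) ` ((\<lambda>z. z + x) ` G)" using x by simp
  also have "\<dots> = G" by (simp add: image_image)
  finally show "-x \<in> {u \<in> L. (\<lambda>x. x + u) ` G = G}" using x grp_neg[OF g] by auto
qed

lemma stab_transl: "stab L ((\<lambda>x. x + v) ` g) = stab L g"
proof -
  have "(\<lambda>x. x + u) ` ((\<lambda>x. x + v) ` g) = (\<lambda>x. x + v) ` ((\<lambda>x. x + u) ` g)" for u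
    by (simp add: image_image algebra_simps)
  moreover have "inj (\<lambda>x::'a. x + v)" by (simp add: inj_on_def)
  ultimately have "((\<lambda>x. x + u) ` ((\<lambda>x. x + v) ` g) = (\<lambda>x. x + v) ` g) \<longleftrightarrow> ((\<lambda>x. x + u) ` g = g)" for u
    by (simp add: inj_image_eq_iff)
  then show ?thesis unfolding stab_def by simp
qed

lemma per_lattice_stab: "per_lattice L G = stab L (SOME g. g \<in> components (tproj L -` G))"
  unfolding per_lattice_def stab_def shadows_def Let_def by simp

theorem mainTheorem7:
  fixes L :: "'a::euclidean_space set"
    and K :: "'a set set"
    and F :: "'a set \<Rightarrow> real"
    and A B :: "'a set set \<times> real"
  assumes "full_lattice L"
    and "cell_complex K"
    and "periodic_complex K L"
    and "monotone_filter K F"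
    and "periodic_filter K F L"
    and "mt_point K F L A"
    and "mt_point K F L B"
    and "covers B A"
  shows "mono_le (frequency L (fst B)) (frequency L (fst A))"
proof -
  obtain B0 where B0: "lattice_basis L B0" using assms(1) unfolding full_lattice_def by blast
  have fB0: "finite B0" and indB0: "independent B0" and LB0: "L = int_span B0"
    using B0 unfolding lattice_basis_def by auto
  have g: "grp L" using LB0 int_span_grp by simp
  define GA where "GA = fst A"
  define GB where "GB = fst B"
  have GA: "GA \<in> connected_components_of (subtopology (torus_top L) (quot_sublevel K F L (snd A)))"
    using assms(6) unfolding mt_point_def GA_def .
  have GB: "GB \<in> connected_components_of (subtopology (torus_top L) (quot_sublevel K F L (snd B)))"
    using assms(7) unfolding mt_point_def GB_def .
  have GAB: "GA \<subseteq> GB" using assms(8) unfolding covers_def GA_def GB_def by simp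
  define QA where "QA = tproj L -` GA"
  define QB where "QB = tproj L -` GB"
  have QAne: "QA \<noteq> {}"
  proof -
    have "GA \<noteq> {}" using nonempty_connected_components_of[OF GA] .
    moreover have "GA \<subseteq> range (tproj L)"
      using connected_components_of_subset[OF GA] unfolding topspace_subtopology topspace_torus by blast
    ultimately show ?thesis unfolding QA_def by blast
  qed
  have QAB: "QA \<subseteq> QB" using GAB unfolding QA_def QB_def by blast
  then have QBne: "QB \<noteq> {}" using QAne by blast
  define gA where "gA = (SOME g. g \<in> components QA)"
  define gB where "gB = (SOME g. g \<in> components QB)"
  have gA: "gA \<in> components QA" unfolding gA_def using QAne by (metis components_eq_empty ex_in_conv someI_ex)
  have gB: "gB \<in> components QB" unfolding gB_def using QBne by (metis components_eq_empty ex_in_conv someI_ex)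
  have LA: "per_lattice L GA = stab L gA" unfolding per_lattice_stab gA_def QA_def ..
  have LB: "per_lattice L GB = stab L gB" unfolding per_lattice_stab gB_def QB_def ..
  have QBinv: "x + u \<in> QB" if "x \<in> QB" "u \<in> L" for x u
    using that tproj_add[OF g] unfolding QB_def by simp
  have QBinv': "x - u \<in> QB" if "x \<in> QB" "u \<in> L" for x u
    using QBinv[OF that(1) grp_neg[OF g that(2)]] by simp
  have gAsub: "gA \<subseteq> QB" using in_components_subset[OF gA] QAB by blast
  obtain h where h: "h \<in> components QB" "gA \<subseteq> h"
    using exists_component_superset[OF gAsub QBne in_components_connected[OF gA]] by blast
  have gAne: "gA \<noteq> {}" using in_components_nonempty[OF gA] .
  have sub1: "stab L gA \<subseteq> stab L h"
  proof
    fix u assume u: "u \<in> stab L gA"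
    then have uL: "u \<in> L" and ug: "(\<lambda>x. x + u) ` gA = gA" unfolding stab_def by auto
    have hu: "(\<lambda>x. x + u) ` h \<in> components QB"
      using comp_transl[OF h(1)] QBinv QBinv' uL by blast
    have "gA \<subseteq> (\<lambda>x. x + u) ` h" using h(2) ug by blast
    then have "(\<lambda>x. x + u) ` h \<inter> h \<noteq> {}" using h(2) gAne by blast
    then have "(\<lambda>x. x + u) ` h = h" using components_eq[OF hu h(1)] by blast
    then show "u \<in> stab L h" unfolding stab_def using uL by blast
  qed
  obtain v where v: "v \<in> L" "h = (\<lambda>x. x + v) ` gB"
    using shadow_translate[OF g assms(2,3,5) GB, folded QB_def, OF gB h(1)] by blast
  have sub: "per_lattice L GA \<subseteq> per_lattice L GB"
    unfolding LA LB using sub1 unfolding v(2) stab_transl .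
  have grpA: "grp (per_lattice L GA)" unfolding LA by (rule stab_grp[OF g])
  have grpB: "grp (per_lattice L GB)" unfolding LB by (rule stab_grp[OF g])
  have inLA: "per_lattice L GA \<subseteq> int_span B0" unfolding LA stab_def LB0[symmetric] by blast
  have inLB: "per_lattice L GB \<subseteq> int_span B0" unfolding LB stab_def LB0[symmetric] by blast
  define CA where "CA = (SOME C. lattice_basis (per_lattice L GA) C)"
  define CB where "CB = (SOME C. lattice_basis (per_lattice L GB) C)"
  have bA: "lattice_basis (per_lattice L GA) CA"
    unfolding CA_def using subgroup_basis[OF fB0 indB0 grpA inLA] by (rule someI_ex)
  have bB: "lattice_basis (per_lattice L GB) CB"
    unfolding CB_def using subgroup_basis[OF fB0 indB0 grpB inLB] by (rule someI_ex)
  have dA: "dim (per_lattice L GA) = card CA" by (rule lattice_basis_dim[OF bA])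
  have dB: "dim (per_lattice L GB) = card CB" by (rule lattice_basis_dim[OF bB])
  have dAB: "dim (per_lattice L GA) \<le> dim (per_lattice L GB)" using sub by (rule dim_subset)
  have dBU: "dim (per_lattice L GB) \<le> DIM('a)" by (rule dim_subset_UNIV)
  define CL where "CL = (SOME C. lattice_basis L C)"
  have bL: "lattice_basis L CL" unfolding CL_def using B0 by (rule someI)
  have volL: "0 \<le> lat_vol L"
    unfolding lat_vol_def CL_def[symmetric] using gram_nonneg[of CL] bL unfolding lattice_basis_def by simp
  show ?thesis
  proof (cases "dim (per_lattice L GA) < dim (per_lattice L GB)")
    case True
    have lt: "DIM('a) - dim (per_lattice L GB) < DIM('a) - dim (per_lattice L GA)"
      using True dBU by linarith
    show ?thesis unfolding mono_le_def frequency_def Let_def GA_def[symmetric] GB_def[symmetric]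
      using lt by simp
  next
    case False
    then have deq: "dim (per_lattice L GA) = dim (per_lattice L GB)" using dAB by simp
    then have "gram_det CB \<le> gram_det CA" using gram_mono[OF bA bB sub] dA dB by simp
    then have vol: "lat_vol (per_lattice L GB) \<le> lat_vol (per_lattice L GA)"
      unfolding lat_vol_def CA_def[symmetric] CB_def[symmetric] by simp
    define q where "q = DIM('a) - dim (per_lattice L GA)"
    have "0 \<le> unit_ball_vol (real q)" by (rule unit_ball_vol_nonneg) simp
    then have "lat_vol (per_lattice L GB) / lat_vol L * unit_ball_vol (real q)
      \<le> lat_vol (per_lattice L GA) / lat_vol L * unit_ball_vol (real q)"
      using vol volL by (intro mult_right_mono divide_right_mono) auto
    then show ?thesis unfolding mono_le_def frequency_def Let_def GA_def[symmetric] GB_def[symmetric]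
      using deq q_def by simp
  qed
qed

end
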